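(* Let $w>1$ and $W=\begin{bmatrix}1&w\\0&1\end{bmatrix}$, and suppose the first token is fixed at $(0,1)$. Define the second-token dynamics on $\mathbb{S}^1$ by $$x^{(t+1)}=\frac{\tfrac12(0,1)W+\tfrac12 x^{(t)}W}{\big\|\tfrac12(0,1)W+\tfrac12 x^{(t)}W\big\|_2}.$$ Then the arc $\{x\in\mathbb{S}^1: x_1\le -1/w\}$ is invariant, and if $x^{(0)}\in\mathbb{S}^1$ satisfies $x^{(0)}_1<-1/w$, then $x^{(t)}\to B=\big(-\tfrac1w,-\sqrt{1-\tfrac1{w^2}}\big)$ as $t\to\infty$. In particular, for such initial data the two tokens $(0,1)$ and $B$ are linearly independent in the limit. (This is the LayerNorm self-attention dynamics with $N=d=2$, causal mask, $W_Q=W_K=0$, so that the attention matrix is $\begin{bmatrix}1&0\\1/2&1/2\end{bmatrix}$, and $W_V=W$.)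
   Context: $\mathbb{S}^1$ is the unit circle in $\mathbb{R}^2$; vectors are row vectors multiplied on the right by $W$. *)

theory Defs
  imports "HOL-Analysis.Analysis"
begin

text \<open>Row vectors in R^2 are real^2; a row vector x is multiplied on the right by W via x v* W.\<close>

definition Wmat :: "real \<Rightarrow> real^2^2" where
  "Wmat w = vector [vector [1, w], vector [0, 1]]"

definition tok1 :: "real^2" where
  "tok1 = vector [0, 1]"

definition step :: "real \<Rightarrow> real^2 \<Rightarrow> real^2" where
  "step w x = (let y = (1/2) *\<^sub>R (tok1 v* Wmat w) + (1/2) *\<^sub>R (x v* Wmat w)
               in (1 / norm y) *\<^sub>R y)"

definition Bpt :: "real \<Rightarrow> real^2" where
  "Bpt w = vector [-1/w, - sqrt (1 - 1/w^2)]"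

end

theory Submission imports Defs begin

lemma norm2: "norm (v::real^2) = sqrt (v$1^2 + v$2^2)"
  by (simp add: norm_vec_def L2_set_def sum_2)

lemma step_comp:
  fixes v :: "real^2" and w :: real
  defines "q \<equiv> v$1 * w + v$2 + 1"
  shows "step w v $ 1 = v$1 / sqrt (v$1^2 + q^2)"
    and "step w v $ 2 = q / sqrt (v$1^2 + q^2)"
proof -
  let ?y = "(1/2) *\<^sub>R (tok1 v* Wmat w) + (1/2) *\<^sub>R (v v* Wmat w)"
  have y1: "?y $ 1 = v$1/2" and y2: "?y $ 2 = q/2"
    by (simp_all add: q_def vector_matrix_mult_def sum_2 tok1_def Wmat_def algebra_simps)
  have n: "norm ?y = sqrt (v$1^2 + q^2) / 2"
    unfolding norm2 y1 y2 by (simp add: power_divide real_sqrt_divide add_divide_distrib[symmetric])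
  have st: "step w v = (1/norm ?y) *\<^sub>R ?y" by (simp add: step_def Let_def)
  show "step w v $ 1 = v$1 / sqrt (v$1^2 + q^2)"
    unfolding st vector_scaleR_component y1 n by simp
  show "step w v $ 2 = q / sqrt (v$1^2 + q^2)"
    unfolding st vector_scaleR_component y2 n by simp
qed

lemma fbounds:
  fixes w m :: real
  assumes w: "w > 1" and mc: "\<bar>m\<bar> \<le> sqrt (w^2 - 1)"
  shows "sqrt (1 + m^2) \<le> w" and "m + w - sqrt (1 + m^2) \<le> sqrt (w^2 - 1)"
proof -
  define c where "c = sqrt (w^2 - 1)"
  have c0: "c \<ge> 0" using w by (simp add: c_def)
  have w2: "1 < w^2" using w by (simp add: power2_eq_square less_1_mult)
  have cc: "c^2 = w^2 - 1" using w2 unfolding c_def by simp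
  have "\<bar>m\<bar> \<le> \<bar>c\<bar>" using mc c0 c_def by simp
  hence "m^2 \<le> c^2" by (simp only: abs_le_square_iff)
  hence "1 + m^2 \<le> w^2" using cc by simp
  hence "sqrt (1 + m^2) \<le> sqrt (w^2)" by (simp only: real_sqrt_le_iff)
  thus "sqrt (1 + m^2) \<le> w" using w by simp
  show "m + w - sqrt (1 + m^2) \<le> sqrt (w^2 - 1)"
  proof (cases "m + w - c \<le> 0")
    case True
    have "sqrt (1 + m^2) \<ge> 0" by simp
    thus ?thesis using True c_def by linarith
  next
    case False
    have wc: "(w - c) * (w + c) = 1" using cc by (simp add: algebra_simps power2_eq_square)
    have mle: "m \<le> c" using abs_le_D1[OF mc] c_def by simp
    have "(m + w - c)^2 \<le> 1 + m^2"
    proof -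
      have "(m + w - c)^2 = m^2 + 2*m*(w-c) + (w-c)^2" by (simp add: power2_eq_square algebra_simps)
      also have "(w-c)^2 = 2*w^2 - 2*w*c - 1" using cc by (simp add: power2_eq_square algebra_simps)
      also have "2*m*(w-c) \<le> 2*c*(w-c)" using mle c0 w cc
      proof -
        have "c \<le> sqrt (w^2)" unfolding c_def by (rule real_sqrt_le_mono) simp
        hence "c \<le> w" using w by simp
        hence "m*(w-c) \<le> c*(w-c)" using mle by (intro mult_right_mono) auto
        thus ?thesis by simp
      qed
      hence "m^2 + 2*m*(w-c) + (2*w^2 - 2*w*c - 1) \<le> m^2 + 2*c*(w-c) + (2*w^2 - 2*w*c - 1)" by simp
      also have "\<dots> = 1 + m^2" using cc by (simp add: power2_eq_square algebra_simps)
      finally show ?thesis .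
    qed
    hence "m + w - c \<le> sqrt (1 + m^2)" using False by (simp add: real_le_rsqrt)
    thus ?thesis using c_def by linarith
  qed
qed

lemma conv:
  fixes a b w :: real
  assumes a: "a < 0" and ab: "a^2 + b^2 = 1" and w: "w > 1"
  shows "sqrt (1 + (b/a)^2) = -1/a"
    and "a \<le> -1/w \<longleftrightarrow> \<bar>b/a\<bar> \<le> sqrt (w^2 - 1)"
    and "a < -1/w \<longleftrightarrow> \<bar>b/a\<bar> < sqrt (w^2 - 1)"
proof -
  have "1 + (b/a)^2 = (1/a)^2" using a ab by (simp add: field_simps)
  thus s: "sqrt (1 + (b/a)^2) = -1/a" using a by simp
  have e1: "a \<le> -1/w \<longleftrightarrow> -1/a \<le> w" using a w by (simp add: field_simps)
  have e2: "a < -1/w \<longleftrightarrow> -1/a < w" using a w by (simp add: field_simps)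
  have "-1/a \<le> w \<longleftrightarrow> sqrt (1 + (b/a)^2) \<le> sqrt (w^2)" using s w by simp
  also have "\<dots> \<longleftrightarrow> 1 + (b/a)^2 \<le> w^2" by (rule real_sqrt_le_iff)
  also have "\<dots> \<longleftrightarrow> (b/a)^2 \<le> w^2 - 1" by arith
  also have "\<dots> \<longleftrightarrow> \<bar>b/a\<bar> \<le> sqrt (w^2 - 1)" 
    by (simp only: real_sqrt_abs[symmetric] real_sqrt_le_iff)
  finally show "a \<le> -1/w \<longleftrightarrow> \<bar>b/a\<bar> \<le> sqrt (w^2 - 1)" using e1 by simp
  have "-1/a < w \<longleftrightarrow> sqrt (1 + (b/a)^2) < sqrt (w^2)" using s w by simp
  also have "\<dots> \<longleftrightarrow> 1 + (b/a)^2 < w^2" by (rule real_sqrt_less_iff)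
  also have "\<dots> \<longleftrightarrow> (b/a)^2 < w^2 - 1" by arith
  also have "\<dots> \<longleftrightarrow> \<bar>b/a\<bar> < sqrt (w^2 - 1)" 
    by (simp only: real_sqrt_abs[symmetric] real_sqrt_less_iff)
  finally show "a < -1/w \<longleftrightarrow> \<bar>b/a\<bar> < sqrt (w^2 - 1)" using e2 by simp
qed


lemma sphere2: "(v::real^2) \<in> sphere 0 1 \<longleftrightarrow> v$1^2 + v$2^2 = 1"
  by (simp add: norm2)

lemma step_prop:
  fixes v :: "real^2" and w :: real
  assumes a: "v$1 < 0" and ab: "v$1^2 + v$2^2 = 1" and w: "w > 1"
  shows "step w v $ 1 < 0" "(step w v $ 1)^2 + (step w v $ 2)^2 = 1"
    "step w v $ 2 / step w v $ 1 = v$2/v$1 + w - sqrt (1 + (v$2/v$1)^2)"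
proof -
  define q where "q = v$1 * w + v$2 + 1"
  define S where "S = sqrt (v$1^2 + q^2)"
  have "v$1^2 > 0" using a by simp
  hence "v$1^2 + q^2 > 0" by (simp add: add_pos_nonneg)
  hence S0: "S > 0" and S2: "S^2 = v$1^2 + q^2" unfolding S_def by simp_all
  have c1: "step w v $ 1 = v$1 / S" and c2: "step w v $ 2 = q / S"
    using step_comp[where v=v and w=w] unfolding q_def S_def by simp_all
  show "step w v $ 1 < 0" using c1 S0 a by (simp add: divide_neg_pos)
  have "(step w v $ 1)^2 + (step w v $ 2)^2 = (v$1^2 + q^2) / S^2" using c1 c2
    by (simp add: power_divide add_divide_distrib)
  thus "(step w v $ 1)^2 + (step w v $ 2)^2 = 1" using S0 S2 a by simp
  have "step w v $ 2 / step w v $ 1 = q / v$1" using c1 c2 S0 a by simp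
  also have "\<dots> = v$2/v$1 + w + 1/v$1" unfolding q_def using a by (simp add: field_simps)
  also have "1/v$1 = - sqrt (1 + (v$2/v$1)^2)" using conv(1)[OF a ab w] by simp
  finally show "step w v $ 2 / step w v $ 1 = v$2/v$1 + w - sqrt (1 + (v$2/v$1)^2)" by simp
qed

lemma part1:
  fixes w :: real and y :: "real^2"
  assumes w: "w > 1" and y: "y \<in> sphere 0 1" "y $ 1 \<le> -1/w"
  shows "step w y \<in> sphere 0 1 \<and> step w y $ 1 \<le> -1/w"
proof -
  have "1/w > 0" using w by simp
  hence a: "y$1 < 0" using y(2) by linarith
  have ab: "y$1^2 + y$2^2 = 1" using y(1) sphere2 by blast
  note sp = step_prop[OF a ab w]
  have m: "\<bar>y$2/y$1\<bar> \<le> sqrt (w^2 - 1)" using conv(2)[OF a ab w] y(2) by simp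
  note fb = fbounds[OF w m]
  have l: "- sqrt (w^2 - 1) \<le> y$2/y$1" using abs_le_D2[OF m] by linarith
  have "\<bar>step w y $ 2 / step w y $ 1\<bar> \<le> sqrt (w^2 - 1)"
    unfolding sp(3) abs_le_iff using fb l by linarith
  hence "step w y $ 1 \<le> -1/w" using conv(2)[OF sp(1) sp(2) w] by simp
  thus ?thesis using sp(2) sphere2 by blast
qed


lemma indep2:
  fixes u v :: "real^2"
  assumes "u$1 = 0" "u \<noteq> 0" "v$1 \<noteq> 0"
  shows "independent {u, v}"
proof (rule independent_insertI)
  have "v \<noteq> 0" using assms(3) by auto
  thus "independent {v}" by (intro independent_insertI independent_empty) auto
  show "u \<notin> span {v}"
  proof
    assume "u \<in> span {v}"
    then obtain k where "u = k *\<^sub>R v" by (auto simp: span_singleton)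
    hence "u$1 = k * v$1" by simp
    hence "k = 0" using assms by simp
    thus False using \<open>u = k *\<^sub>R v\<close> assms(2) by simp
  qed
qed

theorem mainTheorem13:
  fixes w :: real and x :: "nat \<Rightarrow> real^2"
  assumes "w > 1"
    and "\<And>t. x (Suc t) = step w (x t)"
  shows "(\<forall>y \<in> sphere 0 1. y $ 1 \<le> -1/w \<longrightarrow>
            step w y \<in> sphere 0 1 \<and> step w y $ 1 \<le> -1/w)
       \<and> (x 0 \<in> sphere 0 1 \<and> x 0 $ 1 < -1/w \<longrightarrow>
            (x \<longlonglongrightarrow> Bpt w) \<and> tok1 \<noteq> Bpt w \<and> independent {tok1, Bpt w})"
proof (intro conjI ballI impI)
  note w = assms(1)
  show "step w y \<in> sphere 0 1" "step w y $ 1 \<le> -1/w"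
    if "y \<in> sphere 0 1" "y $ 1 \<le> -1/w" for y using part1[OF w that] by auto
  have B1: "Bpt w $ 1 = -1/w" and B2: "Bpt w $ 2 = - sqrt (1 - 1/w^2)" by (simp_all add: Bpt_def)
  have t1: "tok1 $ 1 = 0" "tok1 $ 2 = 1" by (simp_all add: tok1_def)
  show "tok1 \<noteq> Bpt w"
  proof
    assume "tok1 = Bpt w"
    hence "(0::real) = -1/w" using t1 B1 by simp
    thus False using w by simp
  qed
  show "independent {tok1, Bpt w}"
    by (rule indep2) (use t1 B1 w in \<open>auto simp: vec_eq_iff intro!: exI[where x=2]\<close>)
  assume x0: "x 0 \<in> sphere 0 1 \<and> x 0 $ 1 < -1/w"
  define c where "c = sqrt (w^2 - 1)"
  have w2: "1 < w^2" using w by (simp add: power2_eq_square less_1_mult)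
  have c0: "c > 0" using w2 by (simp add: c_def)
  have inv: "x t \<in> sphere 0 1 \<and> x t $ 1 \<le> -1/w" for t
  proof (induction t)
    case 0 thus ?case using x0 by simp
  next
    case (Suc t) thus ?case using part1[OF w] assms(2) by simp
  qed
  have "1/w > 0" using w by simp
  hence a: "x t $ 1 < 0" for t using inv[of t] by linarith
  have ab: "x t $ 1^2 + x t $ 2^2 = 1" for t using inv[of t] sphere2 by blast
  define m where "m t = x t $ 2 / x t $ 1" for t
  define f where "f z = z + w - sqrt (1 + z^2)" for z
  have mS: "m (Suc t) = f (m t)" for t
    unfolding m_def f_def assms(2) using step_prop(3)[OF a ab w] by simp
  have mb: "\<bar>m t\<bar> \<le> c" for t using conv(2)[OF a ab w] inv[of t] by (simp add: m_def c_def)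
  have "\<bar>m 0\<bar> < c" using conv(3)[OF a ab w, of 0] x0 unfolding m_def c_def by blast
  hence m0: "m 0 > -c" by linarith
  have inc: "incseq m"
  proof (rule incseq_SucI)
    fix t
    have "sqrt (1 + (m t)^2) \<le> w" using fbounds(1)[OF w] mb[of t] by (simp add: c_def)
    thus "m t \<le> m (Suc t)" unfolding mS f_def by simp
  qed
  have ub: "\<forall>i. m i \<le> c" using mb abs_le_D1 by blast
  obtain L where L: "m \<longlonglongrightarrow> L" "\<forall>i. m i \<le> L"
    using incseq_convergent[OF inc ub] by blast
  have "(\<lambda>t. f (m t)) \<longlonglongrightarrow> f L" unfolding f_def by (intro tendsto_intros L(1))
  moreover have "(\<lambda>t. f (m t)) \<longlonglongrightarrow> L" unfolding mS[symmetric]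
    using L(1) by (rule LIMSEQ_Suc)
  ultimately have "f L = L" by (rule LIMSEQ_unique)
  hence "sqrt (1 + L^2) = w" unfolding f_def by simp
  hence "1 + L^2 = w^2" by (metis real_sqrt_ge_zero real_sqrt_pow2 zero_le_one add_nonneg_nonneg zero_le_power2)
  hence "L^2 = c^2" using w2 by (simp add: c_def)
  hence "L = c \<or> L = -c" by (simp add: power2_eq_iff)
  moreover have "L > -c" using L(2)[rule_format, of 0] m0 by linarith
  ultimately have Lc: "L = c" by simp
  have x1: "x t $ 1 = -1 / sqrt (1 + (m t)^2)" for t
    using conv(1)[OF a ab w, of t] a[of t] unfolding m_def by (simp add: field_simps)
  have x2: "x t $ 2 = m t * x t $ 1" for t using a[of t] unfolding m_def by simp
  have sw: "sqrt (1 + c^2) = w" using w2 w by (simp add: c_def)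
  have pos: "1 + L^2 \<noteq> 0" using add_pos_nonneg[of 1 "L^2"] by simp
  have l1: "(\<lambda>t. x t $ 1) \<longlonglongrightarrow> -1/w"
    unfolding x1 sw[symmetric] Lc[symmetric] by (intro tendsto_intros L(1)) (use pos in simp)
  have l2: "(\<lambda>t. x t $ 2) \<longlonglongrightarrow> c * (-1/w)"
    unfolding x2 using L(1) l1 Lc by (intro tendsto_mult) auto
  have cw: "c * (-1/w) = - sqrt (1 - 1/w^2)"
  proof -
    have "c / w = sqrt (w^2 - 1) / sqrt (w^2)" using w by (simp add: c_def)
    also have "\<dots> = sqrt ((w^2 - 1) / w^2)" by (simp add: real_sqrt_divide)
    also have "(w^2 - 1) / w^2 = 1 - 1/w^2" using w by (simp add: field_simps)
    finally show ?thesis by simp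
  qed
  show "x \<longlonglongrightarrow> Bpt w"
  proof (rule vec_tendstoI)
    fix i :: 2
    show "(\<lambda>t. x t $ i) \<longlonglongrightarrow> Bpt w $ i"
      using exhaust_2[of i] l1 l2 B1 B2 cw by auto
  qed
qed

end
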